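(* Let $A,B\subset\mathbb F_q^d$ and for $t\in\mathbb F_q$ let $\mu(t)$ be the number of pairs $(a,b)\in A\times B$ with $\|a-b\|=t$. Then \[\sum_{t\in\mathbb F_q}\mu^2(t)\le\frac{|A|^2|B|^2}{q}+\frac{|A|}{q}\sum_{a\in A,\,s\ne0}\Big|\sum_{b\in B}\chi(2sa\cdot b-s\|b\|)\Big|^2.\] Moreover, for any set $\Omega\subset\mathbb F_q^d$ with $\Omega\supset A$, \[\sum_{t\in\mathbb F_q}\mu^2(t)\le\frac{|A|^2|B|^2}{q}+q^{d-1}|A|\sum_{b,b'\in B,\,s\ne0}\widehat{\Omega}(2s(b'-b))\,\chi(s(\|b'\|-\|b\|)).\]
   Context: $\mathbb F_q$ has odd order $q$, $\chi$ is a nontrivial additive character, $\|x\|=x_1^2+\cdots+x_d^2$, sums over $s$ range over $\mathbb F_q^*$. Sets are identified with indicator functions, and $\widehat{\Omega}(m)=q^{-d}\sum_{x\in\mathbb F_q^d}\chi(-x\cdot m)\Omega(x)$. *)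

theory Defs
  imports "HOL-Analysis.Analysis" "HOL-Library.Complex_Order"
begin

text \<open>Vectors in F_q^d are modelled as 'a ^ 'n with 'a a finite field, d = CARD('n).\<close>

definition dotp :: "'a::comm_ring_1 ^ 'n \<Rightarrow> 'a ^ 'n \<Rightarrow> 'a" where
  "dotp x y = (\<Sum>i\<in>UNIV. x $ i * y $ i)"

definition sqnorm :: "'a::comm_ring_1 ^ 'n \<Rightarrow> 'a" where
  "sqnorm x = (\<Sum>i\<in>UNIV. x $ i * x $ i)"

definition additive_char :: "('a::field \<Rightarrow> complex) \<Rightarrow> bool" where
  "additive_char chi \<longleftrightarrow> (\<forall>x. chi x \<noteq> 0) \<and> (\<forall>x y. chi (x + y) = chi x * chi y)"

definition nontrivial_additive_char :: "('a::field \<Rightarrow> complex) \<Rightarrow> bool" where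
  "nontrivial_additive_char chi \<longleftrightarrow> additive_char chi \<and> (\<exists>x. chi x \<noteq> 1)"

definition dist_count :: "('a::{finite,field} ^ 'n) set \<Rightarrow> ('a ^ 'n) set \<Rightarrow> 'a \<Rightarrow> nat" where
  "dist_count A B t = card {(a, b). a \<in> A \<and> b \<in> B \<and> sqnorm (a - b) = t}"

definition fourier_set :: "('a::{finite,field} \<Rightarrow> complex) \<Rightarrow> ('a ^ 'n) set \<Rightarrow> 'a ^ 'n \<Rightarrow> complex" where
  "fourier_set chi \<Omega> m = (1 / of_nat (CARD('a) ^ CARD('n))) * (\<Sum>x\<in>\<Omega>. chi (- dotp x m))"

end

theory Submission
  imports Defs
begin


lemma chi0: assumes "additive_char chi" shows "chi 0 = 1"
proof -
  have "chi 0 = chi 0 * chi 0" using assms unfolding additive_char_def by (metis add_0)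
  moreover have "chi 0 \<noteq> 0" using assms unfolding additive_char_def by auto
  ultimately show ?thesis by (metis mult_cancel_left1)
qed

lemma chi_pow: assumes "additive_char chi" shows "chi x ^ n = chi (of_nat n * x)"
  using assms by (induction n) (auto simp: chi0 additive_char_def distrib_right)

lemma chi_norm: fixes chi :: "'a::{finite,field} \<Rightarrow> complex"
  assumes "additive_char chi" shows "cmod (chi x) = 1"
proof (rule ccontr)
  assume ne: "cmod (chi x) \<noteq> 1"
  have pos: "cmod (chi x) > 0" using assms unfolding additive_char_def by auto
  have "inj (\<lambda>n::nat. chi x ^ n)"
  proof
    fix m n :: nat assume "chi x ^ m = chi x ^ n"
    then have "cmod (chi x) ^ m = cmod (chi x) ^ n" by (metis norm_power)
    then show "m = n" using ne pos by (metis power_inject_exp')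
  qed
  moreover have "range (\<lambda>n::nat. chi x ^ n) \<subseteq> range chi"
    using chi_pow[OF assms] by auto
  then have "finite (range (\<lambda>n::nat. chi x ^ n))" by (rule finite_subset) auto
  ultimately have "finite (UNIV :: nat set)" using finite_imageD by blast
  then show False by simp
qed

lemma chi_neg: fixes chi :: "'a::{finite,field} \<Rightarrow> complex"
  assumes "additive_char chi" shows "chi (- x) = cnj (chi x)"
proof -
  have "chi (-x) * chi x = 1" using assms chi0[OF assms] unfolding additive_char_def by (metis add.left_inverse)
  moreover have "cnj (chi x) * chi x = 1" using chi_norm[OF assms, of x]
    by (metis complex_norm_square mult.commute of_real_1 power_one)
  ultimately show ?thesis using assms unfolding additive_char_def
    by (metis mult_cancel_right)
qed

lemma chi_diff: fixes chi :: "'a::{finite,field} \<Rightarrow> complex"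
  assumes "additive_char chi" shows "chi (x - y) = chi x * cnj (chi y)"
  using assms chi_neg[OF assms] unfolding additive_char_def by (metis diff_conv_add_uminus)

lemma chi_orth: fixes chi :: "'a::{finite,field} \<Rightarrow> complex"
  assumes "nontrivial_additive_char chi"
  shows "(\<Sum>s\<in>UNIV. chi (s * x)) = (if x = 0 then of_nat CARD('a) else 0)"
proof (cases "x = 0")
  case True
  then show ?thesis using chi0[of chi] assms unfolding nontrivial_additive_char_def by simp
next
  case False
  have ac: "additive_char chi" using assms unfolding nontrivial_additive_char_def by auto
  obtain c where c: "chi c \<noteq> 1" using assms unfolding nontrivial_additive_char_def by auto
  have "(\<Sum>s\<in>UNIV. chi (s * x)) = (\<Sum>y\<in>UNIV. chi y)"
    by (rule sum.reindex_bij_witness[where i="\<lambda>y. y / x" and j="\<lambda>s. s * x"]) (use False in auto)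
  moreover have "(\<Sum>y\<in>UNIV. chi y) = (\<Sum>y\<in>UNIV. chi (y + c))"
    by (rule sum.reindex_bij_witness[where i="\<lambda>y. y + c" and j="\<lambda>y. y - c"]) auto
  moreover have "(\<Sum>y\<in>UNIV. chi (y + c)) = chi c * (\<Sum>y\<in>UNIV. chi y)"
    using ac unfolding additive_char_def by (simp add: sum_distrib_left mult.commute)
  ultimately have "(\<Sum>y\<in>UNIV. chi y) = 0" using c
    by (metis mult_cancel_right1 )
  then show ?thesis using False \<open>(\<Sum>s\<in>UNIV. chi (s * x)) = _\<close> by simp
qed

lemma sqnorm_diff: "sqnorm (a - b) = sqnorm a - 2 * dotp a b + sqnorm (b :: 'a::comm_ring_1 ^ 'n)"
proof -
  have "sqnorm (a - b) = (\<Sum>i\<in>UNIV. a $ i * a $ i - 2 * (a $ i * b $ i) + b $ i * b $ i)"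
    unfolding sqnorm_def by (rule sum.cong) (auto simp: algebra_simps mult_2)
  then show ?thesis unfolding sqnorm_def dotp_def
    by (simp add: sum.distrib sum_subtractf sum_distrib_left)
qed



lemma card_count: "finite B \<Longrightarrow> card {b\<in>B. P b} = (\<Sum>b\<in>B. if P b then 1 else (0::nat))"
proof -
  assume "finite B"
  have "{b\<in>B. P b} = B \<inter> Collect P" by auto
  then show ?thesis using \<open>finite B\<close> by (simp add: sum.If_cases)
qed

lemma key:
  fixes chi :: "'a::{finite,field} \<Rightarrow> complex" and a :: "'a ^ 'n" and B :: "('a^'n) set"
  assumes nt: "nontrivial_additive_char chi"
  shows "of_nat CARD('a) * (\<Sum>t\<in>UNIV. of_nat (card {b\<in>B. sqnorm (a - b) = t} ^ 2))
       = (\<Sum>s\<in>UNIV. complex_of_real ((cmod (\<Sum>b\<in>B. chi (2 * s * dotp a b - s * sqnorm b))) ^ 2))"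
proof -
  have ac: "additive_char chi" using nt unfolding nontrivial_additive_char_def by auto
  define u where "u b = sqnorm (a - b)" for b
  have fB: "finite B" by simp
  have L: "(\<Sum>t\<in>UNIV. of_nat (card {b\<in>B. sqnorm (a - b) = t} ^ 2) :: complex)
      = (\<Sum>b\<in>B. \<Sum>b'\<in>B. if u b = u b' then 1 else 0)"
  proof -
    have "(\<Sum>t\<in>UNIV. of_nat (card {b\<in>B. sqnorm (a - b) = t} ^ 2) :: complex)
       = (\<Sum>t\<in>UNIV. \<Sum>b\<in>B. \<Sum>b'\<in>B. (if u b = t then 1 else 0) * (if u b' = t then 1 else 0))"
      unfolding card_count[OF fB] u_def power2_eq_square
      by (simp add: sum_product of_nat_sum; intro sum.cong refl; simp)
    also have "\<dots> = (\<Sum>b\<in>B. \<Sum>b'\<in>B. \<Sum>t\<in>UNIV. (if u b = t then 1 else 0) * (if u b' = t then 1 else 0))"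
      by (subst sum.swap) (simp add: sum.swap[of _ UNIV])
    also have "\<dots> = (\<Sum>b\<in>B. \<Sum>b'\<in>B. if u b = u b' then 1 else 0)"
    proof (intro sum.cong refl)
      fix b b'
      have "(\<Sum>t\<in>UNIV. (if u b = t then 1 else 0) * (if u b' = t then 1 else 0) :: complex)
          = (\<Sum>t\<in>UNIV. if t = u b then (if u b = u b' then 1 else 0) else 0)"
        by (rule sum.cong) auto
      then show "(\<Sum>t\<in>UNIV. (if u b = t then 1 else 0) * (if u b' = t then 1 else 0) :: complex)
          = (if u b = u b' then 1 else 0)" by simp
    qed
    finally show ?thesis .
  qed
  have R: "complex_of_real ((cmod (\<Sum>b\<in>B. chi (2 * s * dotp a b - s * sqnorm b))) ^ 2)
     = (\<Sum>b\<in>B. \<Sum>b'\<in>B. chi (s * (u b' - u b)))" for s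
  proof -
    have g: "2 * s * dotp a b - s * sqnorm b - (2 * s * dotp a b' - s * sqnorm b') = s * (u b' - u b)" for b b'
      unfolding u_def sqnorm_diff by (simp add: algebra_simps)
    have "complex_of_real ((cmod (\<Sum>b\<in>B. chi (2 * s * dotp a b - s * sqnorm b))) ^ 2)
        = (\<Sum>b\<in>B. chi (2 * s * dotp a b - s * sqnorm b)) * cnj (\<Sum>b\<in>B. chi (2 * s * dotp a b - s * sqnorm b))"
      by (rule complex_norm_square)
    also have "\<dots> = (\<Sum>b\<in>B. \<Sum>b'\<in>B. chi (2 * s * dotp a b - s * sqnorm b) * cnj (chi (2 * s * dotp a b' - s * sqnorm b')))"
      by (simp add: sum_product)
    also have "\<dots> = (\<Sum>b\<in>B. \<Sum>b'\<in>B. chi (s * (u b' - u b)))"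
      by (simp add: chi_diff[OF ac, symmetric] g)
    finally show ?thesis .
  qed
  have "(\<Sum>s\<in>UNIV. complex_of_real ((cmod (\<Sum>b\<in>B. chi (2 * s * dotp a b - s * sqnorm b))) ^ 2))
      = (\<Sum>b\<in>B. \<Sum>b'\<in>B. \<Sum>s\<in>UNIV. chi (s * (u b' - u b)))"
    unfolding R by (subst sum.swap) (simp add: sum.swap[of _ UNIV])
  also have "\<dots> = (\<Sum>b\<in>B. \<Sum>b'\<in>B. of_nat CARD('a) * (if u b = u b' then 1 else 0))"
    unfolding chi_orth[OF nt] by (intro sum.cong refl) auto
  also have "\<dots> = of_nat CARD('a) * (\<Sum>b\<in>B. \<Sum>b'\<in>B. if u b = u b' then 1 else 0)"
    by (simp add: sum_distrib_left)
  finally show ?thesis unfolding L by simp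
qed



lemma normsq:
  fixes chi :: "'a::{finite,field} \<Rightarrow> complex"
  assumes ac: "additive_char chi" and "finite B"
  shows "complex_of_real ((cmod (\<Sum>b\<in>B. chi (f b))) ^ 2) = (\<Sum>b\<in>B. \<Sum>b'\<in>B. chi (f b - f b'))"
proof -
  have "complex_of_real ((cmod (\<Sum>b\<in>B. chi (f b))) ^ 2) = (\<Sum>b\<in>B. chi (f b)) * cnj (\<Sum>b\<in>B. chi (f b))"
    by (rule complex_norm_square)
  also have "\<dots> = (\<Sum>b\<in>B. \<Sum>b'\<in>B. chi (f b) * cnj (chi (f b')))"
    by (simp add: sum_product)
  finally show ?thesis by (simp add: chi_diff[OF ac])
qed

lemma dotp_m: "dotp x (\<chi> i. 2 * s * (b' $ i - b $ i)) = 2 * s * (dotp x b' - dotp x (b :: 'a::comm_ring_1^'n))"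
  unfolding dotp_def by (simp add: sum_distrib_left sum_subtractf[symmetric] algebra_simps)

lemma swap4: "(\<Sum>x\<in>X. \<Sum>s\<in>S. \<Sum>b\<in>B. \<Sum>b'\<in>C. F x s b b') = (\<Sum>b\<in>B. \<Sum>b'\<in>C. \<Sum>s\<in>S. \<Sum>x\<in>X. F x s b b')"
proof -
  have "(\<Sum>x\<in>X. \<Sum>s\<in>S. \<Sum>b\<in>B. \<Sum>b'\<in>C. F x s b b') = (\<Sum>x\<in>X. \<Sum>b\<in>B. \<Sum>b'\<in>C. \<Sum>s\<in>S. F x s b b')"
  proof (rule sum.cong[OF refl])
    fix x
    have "(\<Sum>s\<in>S. \<Sum>b\<in>B. \<Sum>b'\<in>C. F x s b b') = (\<Sum>b\<in>B. \<Sum>s\<in>S. \<Sum>b'\<in>C. F x s b b')" by (rule sum.swap)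
    also have "\<dots> = (\<Sum>b\<in>B. \<Sum>b'\<in>C. \<Sum>s\<in>S. F x s b b')" by (rule sum.cong[OF refl], rule sum.swap)
    finally show "(\<Sum>s\<in>S. \<Sum>b\<in>B. \<Sum>b'\<in>C. F x s b b') = (\<Sum>b\<in>B. \<Sum>b'\<in>C. \<Sum>s\<in>S. F x s b b')" .
  qed
  also have "\<dots> = (\<Sum>b\<in>B. \<Sum>x\<in>X. \<Sum>b'\<in>C. \<Sum>s\<in>S. F x s b b')" by (rule sum.swap)
  also have "\<dots> = (\<Sum>b\<in>B. \<Sum>b'\<in>C. \<Sum>x\<in>X. \<Sum>s\<in>S. F x s b b')" by (rule sum.cong[OF refl], rule sum.swap)
  also have "\<dots> = (\<Sum>b\<in>B. \<Sum>b'\<in>C. \<Sum>s\<in>S. \<Sum>x\<in>X. F x s b b')" by (rule sum.cong[OF refl], rule sum.cong[OF refl], rule sum.swap)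
  finally show ?thesis .
qed

lemma part2:
  fixes chi :: "'a::{finite,field} \<Rightarrow> complex" and B \<Omega> :: "('a ^ 'n) set"
  assumes ac: "additive_char chi"
  shows "complex_of_real (\<Sum>x\<in>\<Omega>. \<Sum>s\<in>UNIV - {0}. (cmod (\<Sum>b\<in>B. chi (2 * s * dotp x b - s * sqnorm b))) ^ 2)
    = of_nat (CARD('a) ^ CARD('n)) * (\<Sum>b\<in>B. \<Sum>b'\<in>B. \<Sum>s\<in>UNIV - {0}.
                  fourier_set chi \<Omega> (\<chi> i. 2 * s * (b' $ i - b $ i))
                  * chi (s * (sqnorm b' - sqnorm b)))"
proof -
  have g: "2 * s * dotp x b - s * sqnorm b - (2 * s * dotp x b' - s * sqnorm b')
     = - dotp x (\<chi> i. 2 * s * (b' $ i - b $ i)) + s * (sqnorm b' - sqnorm b)" for x s b b'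
    unfolding dotp_m by (simp add: algebra_simps)
  have "complex_of_real (\<Sum>x\<in>\<Omega>. \<Sum>s\<in>UNIV - {0}. (cmod (\<Sum>b\<in>B. chi (2 * s * dotp x b - s * sqnorm b))) ^ 2)
     = (\<Sum>x\<in>\<Omega>. \<Sum>s\<in>UNIV - {0}. \<Sum>b\<in>B. \<Sum>b'\<in>B. chi (- dotp x (\<chi> i. 2 * s * (b' $ i - b $ i))) * chi (s * (sqnorm b' - sqnorm b)))"
  proof -
    have st: "complex_of_real ((cmod (\<Sum>b\<in>B. chi (2 * s * dotp x b - s * sqnorm b))) ^ 2)
      = (\<Sum>b\<in>B. \<Sum>b'\<in>B. chi (- dotp x (\<chi> i. 2 * s * (b' $ i - b $ i))) * chi (s * (sqnorm b' - sqnorm b)))" for x s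
      apply (subst normsq[OF ac, of B])
      using ac unfolding additive_char_def by (simp_all only: g ac[unfolded additive_char_def, THEN conjunct2, rule_format] finite)
    show ?thesis unfolding of_real_sum st ..
  qed
  also have "\<dots> = (\<Sum>b\<in>B. \<Sum>b'\<in>B. \<Sum>s\<in>UNIV - {0}. \<Sum>x\<in>\<Omega>. chi (- dotp x (\<chi> i. 2 * s * (b' $ i - b $ i))) * chi (s * (sqnorm b' - sqnorm b)))"
    by (rule swap4)
  also have "\<dots> = (\<Sum>b\<in>B. \<Sum>b'\<in>B. \<Sum>s\<in>UNIV - {0}. of_nat (CARD('a) ^ CARD('n)) * (
                  fourier_set chi \<Omega> (\<chi> i. 2 * s * (b' $ i - b $ i))
                  * chi (s * (sqnorm b' - sqnorm b))))"
    unfolding fourier_set_def by (simp add: sum_distrib_right)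
  finally show ?thesis by (simp add: sum_distrib_left)
qed



theorem lemma6p1:
  fixes chi :: "'a::{finite,field} \<Rightarrow> complex"
    and A B :: "('a ^ 'n) set"
  assumes "odd (CARD('a))"
    and "nontrivial_additive_char chi"
  shows "((\<Sum>t\<in>UNIV. real (dist_count A B t ^ 2))
           \<le> real (card A) ^ 2 * real (card B) ^ 2 / real CARD('a)
             + real (card A) / real CARD('a) *
               (\<Sum>a\<in>A. \<Sum>s\<in>UNIV - {0}.
                  (cmod (\<Sum>b\<in>B. chi (2 * s * dotp a b - s * sqnorm b))) ^ 2))
       \<and> (\<forall>\<Omega>. A \<subseteq> \<Omega> \<longrightarrow>
           complex_of_real (\<Sum>t\<in>UNIV. real (dist_count A B t ^ 2))
           \<le> complex_of_real (real (card A) ^ 2 * real (card B) ^ 2 / real CARD('a))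
             + of_nat (CARD('a) ^ (CARD('n) - 1)) * of_nat (card A) *
               (\<Sum>b\<in>B. \<Sum>b'\<in>B. \<Sum>s\<in>UNIV - {0}.
                  fourier_set chi \<Omega> (\<chi> i. 2 * s * (b' $ i - b $ i))
                  * chi (s * (sqnorm b' - sqnorm b))))"
proof -
  have nt: "nontrivial_additive_char chi" by fact
  have ac: "additive_char chi" using nt unfolding nontrivial_additive_char_def by auto
  define q where "q = real CARD('a)"
  have qpos: "q > 0" unfolding q_def by simp
  define nu where "nu a t = card {b\<in>B. sqnorm (a - b) = t}" for a t
  define W where "W x = (\<Sum>s\<in>UNIV - {0}. (cmod (\<Sum>b\<in>B. chi (2 * s * dotp x b - s * sqnorm b))) ^ 2)" for x
  have Wnn: "W x \<ge> 0" for x unfolding W_def by (intro sum_nonneg) auto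
  have perA: "q * (\<Sum>t\<in>UNIV. real (nu a t) ^ 2) = real (card B) ^ 2 + W a" for a
  proof -
    have k: "of_nat CARD('a) * (\<Sum>t\<in>UNIV. of_nat (nu a t ^ 2))
       = (\<Sum>s\<in>UNIV. complex_of_real ((cmod (\<Sum>b\<in>B. chi (2 * s * dotp a b - s * sqnorm b))) ^ 2))"
      unfolding nu_def by (rule key[OF nt])
    also have "\<dots> = complex_of_real ((cmod (\<Sum>b\<in>B. chi (2 * 0 * dotp a b - 0 * sqnorm b))) ^ 2)
       + (\<Sum>s\<in>UNIV - {0}. complex_of_real ((cmod (\<Sum>b\<in>B. chi (2 * s * dotp a b - s * sqnorm b))) ^ 2))"
      by (rule sum.remove) auto
    also have "\<dots> = complex_of_real (real (card B) ^ 2 + W a)"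
      unfolding W_def by (simp add: chi0[OF ac])
    finally have "complex_of_real (q * (\<Sum>t\<in>UNIV. real (nu a t) ^ 2)) = complex_of_real (real (card B) ^ 2 + W a)"
      unfolding q_def by simp
    then show ?thesis using of_real_eq_iff by blast
  qed
  have dc: "dist_count A B t = (\<Sum>a\<in>A. nu a t)" for t
  proof -
    have "{(a, b). a \<in> A \<and> b \<in> B \<and> sqnorm (a - b) = t} = Sigma A (\<lambda>a. {b\<in>B. sqnorm (a - b) = t})"
      by auto
    then show ?thesis unfolding dist_count_def nu_def by (simp add: card_SigmaI)
  qed
  have P1: "(\<Sum>t\<in>UNIV. real (dist_count A B t ^ 2))
      \<le> real (card A) ^ 2 * real (card B) ^ 2 / q + real (card A) / q * (\<Sum>a\<in>A. W a)"
  proof -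
    have "(\<Sum>t\<in>UNIV. real (dist_count A B t ^ 2)) = (\<Sum>t\<in>UNIV. (\<Sum>a\<in>A. real (nu a t)) ^ 2)"
      unfolding dc by simp
    also have "\<dots> \<le> (\<Sum>t\<in>UNIV. (\<Sum>a\<in>A. real (nu a t) ^ 2) * card A)"
      by (intro sum_mono sum_squared_le_sum_of_squares)
    also have "\<dots> = real (card A) * (\<Sum>a\<in>A. \<Sum>t\<in>UNIV. real (nu a t) ^ 2)"
      by (subst sum.swap) (simp add: sum_distrib_left sum_distrib_right mult.commute)
    also have "\<dots> = real (card A) * (\<Sum>a\<in>A. (real (card B) ^ 2 + W a) / q)"
      using perA qpos by (intro arg_cong2[where f="(*)"] sum.cong refl) (auto simp: field_simps)
    also have "\<dots> = real (card A) * ((real (card A) * real (card B) ^ 2 + (\<Sum>a\<in>A. W a)) / q)"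
      by (simp add: sum_divide_distrib[symmetric] sum.distrib)
    also have "\<dots> = real (card A) ^ 2 * real (card B) ^ 2 / q + real (card A) / q * (\<Sum>a\<in>A. W a)"
      by (simp add: add_divide_distrib distrib_left power2_eq_square)
    finally show ?thesis .
  qed
  show ?thesis
  proof (intro conjI allI impI)
    show "(\<Sum>t\<in>UNIV. real (dist_count A B t ^ 2))
           \<le> real (card A) ^ 2 * real (card B) ^ 2 / real CARD('a)
             + real (card A) / real CARD('a) *
               (\<Sum>a\<in>A. \<Sum>s\<in>UNIV - {0}.
                  (cmod (\<Sum>b\<in>B. chi (2 * s * dotp a b - s * sqnorm b))) ^ 2)"
      using P1 unfolding q_def W_def .
  next
    fix \<Omega> :: "('a^'n) set" assume sub: "A \<subseteq> \<Omega>"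
    have AO: "(\<Sum>a\<in>A. W a) \<le> (\<Sum>a\<in>\<Omega>. W a)"
      by (rule sum_mono2) (use sub Wnn in auto)
    define Z where "Z = (\<Sum>b\<in>B. \<Sum>b'\<in>B. \<Sum>s\<in>UNIV - {0}.
                  fourier_set chi \<Omega> (\<chi> i. 2 * s * (b' $ i - b $ i))
                  * chi (s * (sqnorm b' - sqnorm b)))"
    have p2: "complex_of_real (\<Sum>a\<in>\<Omega>. W a) = of_nat (CARD('a) ^ CARD('n)) * Z"
      unfolding W_def Z_def by (rule part2[OF ac])
    have dpos: "CARD('n) \<ge> 1" by (simp add: Suc_leI)
    have qq: "real (CARD('a) ^ CARD('n)) = q * real (CARD('a) ^ (CARD('n) - 1))"
      unfolding q_def using dpos by (simp add: power_eq_if[of _ "CARD('n)"] split: if_splits)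
    have Zeq: "Z = complex_of_real ((\<Sum>a\<in>\<Omega>. W a) / real (CARD('a) ^ CARD('n)))"
      using p2 by (simp add: field_simps del: of_nat_power)
    have rhs: "complex_of_real (real (card A) ^ 2 * real (card B) ^ 2 / real CARD('a))
             + of_nat (CARD('a) ^ (CARD('n) - 1)) * of_nat (card A) * Z
         = complex_of_real (real (card A) ^ 2 * real (card B) ^ 2 / q + real (card A) / q * (\<Sum>a\<in>\<Omega>. W a))"
      unfolding Zeq qq q_def using qpos unfolding q_def by (simp add: field_simps)
    have "(\<Sum>t\<in>UNIV. real (dist_count A B t ^ 2)) \<le> real (card A) ^ 2 * real (card B) ^ 2 / q + real (card A) / q * (\<Sum>a\<in>\<Omega>. W a)"
      using P1 AO qpos by (smt (verit) divide_nonneg_pos mult_left_mono of_nat_0_le_iff)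
    then show "complex_of_real (\<Sum>t\<in>UNIV. real (dist_count A B t ^ 2))
           \<le> complex_of_real (real (card A) ^ 2 * real (card B) ^ 2 / real CARD('a))
             + of_nat (CARD('a) ^ (CARD('n) - 1)) * of_nat (card A) * Z"
      unfolding rhs by (simp add: less_eq_complex_def)
  qed
qed

end
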